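(* Let $p\colon E\to B$ be an arc-hedgehog covering with $E$ a Peano space. Then $p$ is regular if and only if the deck transformation group $DTG(p)$ acts transitively on each fiber of $p$ (i.e., for all $e_1,e_2\in E$ with $p(e_1)=p(e_2)$ there is $h\in DTG(p)$ with $h(e_1)=e_2$).
   Context: All maps are continuous. A Peano space is a connected, locally path-connected space. For a class $\mathcal{P}$ of spaces, a map $p\colon E\to B$ is a $\mathcal{P}$-covering if for every $e_0\in E$, $X\in\mathcal{P}$, $x_0\in X$ and map $f\colon X\to B$ with $f(x_0)=p(e_0)$ there is a unique map $g\colon X\to E$ with $p\circ g=f$ and $g(x_0)=e_0$. A directed wedge is the wedge $(Z,z_0)=\bigvee_{s\in S}(Z_s,z_s)$ of pointed Peano spaces indexed by a directed set $S$, with the topology: $U\subset Z\setminus\{z_0\}$ is open iff each $U\cap Z_s$ is open in $Z_s$; $U\ni z_0$ is an open neighborhood of $z_0$ iff each $U\cap Z_s$ is open and there is $t\in S$ with $Z_s\subset U$ for all $s>t$. An arc-hedgehog is a directed wedge with each $(Z_s,z_s)\cong([0,1],0)$; an arc-hedgehog covering is a $\mathcal{P}$-covering for $\mathcal{P}$ the class of all arc-hedgehogs (it is in particular an arc-covering, i.e., has unique lifts of paths). Such a covering is regular if for every loop $\alpha$ in $B$ either all lifts of $\alpha$ to $E$ are loops or none are. $DTG(p)$ is the group of homeomorphisms $h\colon E\to E$ with $p\circ h=p$. *)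

theory Defs
  imports "HOL-Analysis.Analysis"
begin

definition peano_space :: "'a topology \<Rightarrow> bool" where
  "peano_space X \<longleftrightarrow> connected_space X \<and> locally_path_connected_space X"

definition directed_set :: "'i set \<Rightarrow> ('i \<Rightarrow> 'i \<Rightarrow> bool) \<Rightarrow> bool" where
  "directed_set S le \<longleftrightarrow> S \<noteq> {} \<and> (\<forall>s\<in>S. le s s)
     \<and> (\<forall>r\<in>S. \<forall>s\<in>S. \<forall>t\<in>S. le r s \<and> le s t \<longrightarrow> le r t)
     \<and> (\<forall>s\<in>S. \<forall>t\<in>S. \<exists>u\<in>S. le s u \<and> le t u)"

definition dstrict :: "('i \<Rightarrow> 'i \<Rightarrow> bool) \<Rightarrow> 'i \<Rightarrow> 'i \<Rightarrow> bool" where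
  "dstrict le t s \<longleftrightarrow> le t s \<and> \<not> le s t"

text \<open>Points of the arc-hedgehog: the base point (wedge point) is None; the point at
  parameter x of spine s is Some (s, x) for 0 < x \<le> 1; parameter 0 is the base point.\<close>
definition hh_point :: "'i \<Rightarrow> real \<Rightarrow> ('i \<times> real) option" where
  "hh_point s x = (if x = 0 then None else Some (s, x))"

definition hh_carrier :: "'i set \<Rightarrow> ('i \<times> real) option set" where
  "hh_carrier S = insert None {Some (s, x) | s x. s \<in> S \<and> 0 < x \<and> x \<le> 1}"

text \<open>Open sets of the directed wedge of arcs ([0,1],0) indexed by the directed set (S, le).\<close>
definition hh_open :: "'i set \<Rightarrow> ('i \<Rightarrow> 'i \<Rightarrow> bool) \<Rightarrow> ('i \<times> real) option set \<Rightarrow> bool" where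
  "hh_open S le U \<longleftrightarrow> U \<subseteq> hh_carrier S
     \<and> (\<forall>s\<in>S. openin (top_of_set {0..1::real}) {x \<in> {0..1}. hh_point s x \<in> U})
     \<and> (None \<in> U \<longrightarrow> (\<exists>t\<in>S. \<forall>s\<in>S. dstrict le t s \<longrightarrow> (\<forall>x\<in>{0..1}. hh_point s x \<in> U)))"

lemma istopology_hh_open:
  assumes "directed_set S le"
  shows "istopology (hh_open S le)"
  unfolding istopology_def
proof (intro conjI allI impI)
  fix U V assume U: "hh_open S le U" and V: "hh_open S le V"
  show "hh_open S le (U \<inter> V)"
    unfolding hh_open_def
  proof (intro conjI ballI impI)
    show "U \<inter> V \<subseteq> hh_carrier S" using U unfolding hh_open_def by blast
  next
    fix s assume "s \<in> S"
    have "{x \<in> {0..1}. hh_point s x \<in> U \<inter> V} = {x \<in> {0..1}. hh_point s x \<in> U} \<inter> {x \<in> {0..1}. hh_point s x \<in> V}" by blast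
    moreover have "openin (top_of_set {0..1}) ({x \<in> {0..1}. hh_point s x \<in> U} \<inter> {x \<in> {0..1}. hh_point s x \<in> V})"
      using U V \<open>s\<in>S\<close> unfolding hh_open_def by (intro openin_Int) blast+
    ultimately show "openin (top_of_set {0..1}) {x \<in> {0..1}. hh_point s x \<in> U \<inter> V}" by simp
  next
    assume N: "None \<in> U \<inter> V"
    have "\<exists>t\<in>S. \<forall>s\<in>S. dstrict le t s \<longrightarrow> (\<forall>x\<in>{0..1}. hh_point s x \<in> U)"
      using U N unfolding hh_open_def by simp
    then obtain t1 where t1: "t1\<in>S" "\<forall>s\<in>S. dstrict le t1 s \<longrightarrow> (\<forall>x\<in>{0..1}. hh_point s x \<in> U)" ..
    have "\<exists>t\<in>S. \<forall>s\<in>S. dstrict le t s \<longrightarrow> (\<forall>x\<in>{0..1}. hh_point s x \<in> V)"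
      using V N unfolding hh_open_def by simp
    then obtain t2 where t2: "t2\<in>S" "\<forall>s\<in>S. dstrict le t2 s \<longrightarrow> (\<forall>x\<in>{0..1}. hh_point s x \<in> V)" ..
    have ub: "\<forall>s\<in>S. \<forall>t\<in>S. \<exists>u\<in>S. le s u \<and> le t u"
      using assms unfolding directed_set_def by (elim conjE)
    have "\<exists>u\<in>S. le t1 u \<and> le t2 u" using ub t1(1) t2(1) by blast
    then obtain u where u: "u\<in>S" "le t1 u" "le t2 u" by blast
    have trr: "\<forall>r\<in>S. \<forall>s\<in>S. \<forall>t\<in>S. le r s \<and> le s t \<longrightarrow> le r t"
      using assms unfolding directed_set_def by (elim conjE)
    have tr: "\<And>r s t. r\<in>S \<Longrightarrow> s\<in>S \<Longrightarrow> t\<in>S \<Longrightarrow> le r s \<Longrightarrow> le s t \<Longrightarrow> le r t"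
      using trr by blast
    have st: "dstrict le t1 s \<and> dstrict le t2 s" if "s\<in>S" "dstrict le u s" for s
    proof -
      have "le u s" "\<not> le s u" using that(2) unfolding dstrict_def by auto
      then have "le t1 s" "le t2 s" "\<not> le s t1" "\<not> le s t2"
        using tr[of t1 u s] tr[of t2 u s] tr[of s t1 u] tr[of s t2 u] u t1(1) t2(1) that(1) by blast+
      then show ?thesis unfolding dstrict_def by simp
    qed
    show "\<exists>t\<in>S. \<forall>s\<in>S. dstrict le t s \<longrightarrow> (\<forall>x\<in>{0..1}. hh_point s x \<in> U \<inter> V)"
    proof (intro bexI[of _ u] ballI impI)
      fix s x assume "s\<in>S" "dstrict le u s" "x \<in> {0..1::real}"
      then show "hh_point s x \<in> U \<inter> V" using st t1(2) t2(2) by blast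
    qed (rule u(1))
  qed
next
  fix K assume K: "\<forall>U\<in>K. hh_open S le U"
  show "hh_open S le (\<Union>K)"
    unfolding hh_open_def
  proof (intro conjI ballI impI)
    show "\<Union>K \<subseteq> hh_carrier S" using K unfolding hh_open_def by blast
  next
    fix s assume "s \<in> S"
    have "{x \<in> {0..1}. hh_point s x \<in> \<Union>K} = (\<Union>U\<in>K. {x \<in> {0..1}. hh_point s x \<in> U})" by blast
    moreover have "openin (top_of_set {0..1}) (\<Union>U\<in>K. {x \<in> {0..1}. hh_point s x \<in> U})"
      using K \<open>s\<in>S\<close> unfolding hh_open_def by (intro openin_Union) blast
    ultimately show "openin (top_of_set {0..1}) {x \<in> {0..1}. hh_point s x \<in> \<Union>K}" by simp
  next
    assume "None \<in> \<Union>K"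
    then obtain U where UK: "U\<in>K" "None\<in>U" by blast
    then have "hh_open S le U" using K by blast
    then have "\<exists>t\<in>S. \<forall>s\<in>S. dstrict le t s \<longrightarrow> (\<forall>x\<in>{0..1}. hh_point s x \<in> U)"
      using UK(2) unfolding hh_open_def by simp
    then show "\<exists>t\<in>S. \<forall>s\<in>S. dstrict le t s \<longrightarrow> (\<forall>x\<in>{0..1}. hh_point s x \<in> \<Union>K)"
      using UK(1) by blast
  qed
qed

definition arc_hedgehog :: "'i set \<Rightarrow> ('i \<Rightarrow> 'i \<Rightarrow> bool) \<Rightarrow> ('i \<times> real) option topology" where
  "arc_hedgehog S le = topology (hh_open S le)"

text \<open>Arc-hedgehog covering, for all arc-hedgehogs indexed by directed subsets of the type 'i:
  unique lifting (uniqueness on the carrier) for every based map from an arc-hedgehog.\<close>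
definition arc_hedgehog_covering ::
    "'i itself \<Rightarrow> 'e topology \<Rightarrow> 'b topology \<Rightarrow> ('e \<Rightarrow> 'b) \<Rightarrow> bool" where
  "arc_hedgehog_covering _ E B p \<longleftrightarrow> continuous_map E B p \<and>
     (\<forall>e0 \<in> topspace E. \<forall>(S::'i set) le. directed_set S le \<longrightarrow>
        (\<forall>x0 \<in> topspace (arc_hedgehog S le). \<forall>f.
           continuous_map (arc_hedgehog S le) B f \<and> f x0 = p e0 \<longrightarrow>
           (\<exists>g. continuous_map (arc_hedgehog S le) E g
                \<and> (\<forall>z\<in>topspace (arc_hedgehog S le). p (g z) = f z) \<and> g x0 = e0
                \<and> (\<forall>g'. continuous_map (arc_hedgehog S le) E g'
                        \<and> (\<forall>z\<in>topspace (arc_hedgehog S le). p (g' z) = f z) \<and> g' x0 = e0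
                        \<longrightarrow> (\<forall>z\<in>topspace (arc_hedgehog S le). g' z = g z)))))"

definition is_lift :: "'e topology \<Rightarrow> ('e \<Rightarrow> 'b) \<Rightarrow> (real \<Rightarrow> 'b) \<Rightarrow> (real \<Rightarrow> 'e) \<Rightarrow> bool" where
  "is_lift E p \<alpha> \<beta> \<longleftrightarrow> pathin E \<beta> \<and> (\<forall>t\<in>{0..1}. p (\<beta> t) = \<alpha> t)"

definition regular_covering :: "'e topology \<Rightarrow> 'b topology \<Rightarrow> ('e \<Rightarrow> 'b) \<Rightarrow> bool" where
  "regular_covering E B p \<longleftrightarrow>
     (\<forall>\<alpha>. pathin B \<alpha> \<and> \<alpha> 0 = \<alpha> 1 \<longrightarrow>
        (\<forall>\<beta>. is_lift E p \<alpha> \<beta> \<longrightarrow> \<beta> 0 = \<beta> 1) \<or> (\<forall>\<beta>. is_lift E p \<alpha> \<beta> \<longrightarrow> \<beta> 0 \<noteq> \<beta> 1))"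

definition DTG :: "'e topology \<Rightarrow> ('e \<Rightarrow> 'b) \<Rightarrow> ('e \<Rightarrow> 'e) set" where
  "DTG E p = {h. homeomorphic_map E E h \<and> (\<forall>e\<in>topspace E. p (h e) = p e)}"

end

theory Submission
  imports Defs
begin

lemma hh_point_in: "s \<in> S \<Longrightarrow> x \<in> {0..1} \<Longrightarrow> hh_point s x \<in> hh_carrier S"
  by (auto simp: hh_point_def hh_carrier_def)

lemma hh_carrier_open:
  assumes "directed_set S le" shows "hh_open S le (hh_carrier S)"
proof -
  have "S \<noteq> {}" using assms by (simp add: directed_set_def)
  then obtain t where "t \<in> S" by blast
  have "{x \<in> {0..1}. hh_point s x \<in> hh_carrier S} = {0..1}" if "s \<in> S" for s
    using hh_point_in[OF that] by auto
  then show ?thesis unfolding hh_open_def using \<open>t\<in>S\<close> hh_point_in by auto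
qed

lemma hh_openin:
  assumes "directed_set S le"
  shows "openin (arc_hedgehog S le) = hh_open S le"
  unfolding arc_hedgehog_def using istopology_hh_open[OF assms] by (simp add: topology_inverse')

lemma hh_topspace:
  assumes "directed_set S le"
  shows "topspace (arc_hedgehog S le) = hh_carrier S"
proof -
  have "topspace (arc_hedgehog S le) = \<Union>{U. hh_open S le U}"
    by (simp add: topspace_def hh_openin[OF assms])
  also have "\<dots> = hh_carrier S"
    using hh_carrier_open[OF assms] by (auto simp: hh_open_def)
  finally show ?thesis .
qed

lemma hh_point_cont:
  assumes "directed_set S le" "s \<in> S"
  shows "continuous_map (top_of_set {0..1}) (arc_hedgehog S le) (hh_point s)"
  unfolding continuous_map_def
proof (intro conjI allI impI)
  show "hh_point s \<in> topspace (top_of_set {0..1}) \<rightarrow> topspace (arc_hedgehog S le)"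
    using hh_point_in[OF assms(2)] by (auto simp: hh_topspace[OF assms(1)])
  fix U assume "openin (arc_hedgehog S le) U"
  then have "hh_open S le U" by (simp add: hh_openin[OF assms(1)])
  then show "openin (top_of_set {0..1}) {x \<in> topspace (top_of_set {0..1}). hh_point s x \<in> U}"
    using assms(2) unfolding hh_open_def by auto
qed

lemma hh_cont_crit:
  assumes D: "directed_set S le"
    and top: "\<And>z. z \<in> hh_carrier S \<Longrightarrow> F z \<in> topspace X"
    and sp: "\<And>s. s \<in> S \<Longrightarrow> continuous_map (top_of_set {0..1}) X (F \<circ> hh_point s)"
    and nb: "\<And>W. openin X W \<Longrightarrow> F None \<in> W \<Longrightarrow>
               (\<exists>t\<in>S. \<forall>s\<in>S. dstrict le t s \<longrightarrow> (\<forall>x\<in>{0..1}. F (hh_point s x) \<in> W))"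
  shows "continuous_map (arc_hedgehog S le) X F"
  unfolding continuous_map_def
proof (intro conjI allI impI)
  show "F \<in> topspace (arc_hedgehog S le) \<rightarrow> topspace X"
    using top by (auto simp: hh_topspace[OF D])
  fix W assume W: "openin X W"
  have "hh_open S le {z \<in> hh_carrier S. F z \<in> W}"
    unfolding hh_open_def
  proof (intro conjI ballI impI)
    show "{z \<in> hh_carrier S. F z \<in> W} \<subseteq> hh_carrier S" by blast
  next
    fix s assume s: "s \<in> S"
    have "{x \<in> {0..1}. hh_point s x \<in> {z \<in> hh_carrier S. F z \<in> W}}
          = {x \<in> topspace (top_of_set {0..1}). (F \<circ> hh_point s) x \<in> W}"
      using hh_point_in[OF s] by (auto simp del: atLeastAtMost_iff)
    moreover have "openin (top_of_set {0..1}) {x \<in> topspace (top_of_set {0..1}). (F \<circ> hh_point s) x \<in> W}"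
      using sp[OF s] W by (simp add: continuous_map_def)
    ultimately show "openin (top_of_set {0..1}) {x \<in> {0..1}. hh_point s x \<in> {z \<in> hh_carrier S. F z \<in> W}}"
      by simp
  next
    assume "None \<in> {z \<in> hh_carrier S. F z \<in> W}"
    then obtain t where t: "t\<in>S" "\<forall>s\<in>S. dstrict le t s \<longrightarrow> (\<forall>x\<in>{0..1}. F (hh_point s x) \<in> W)"
      using nb[OF W] by blast
    show "\<exists>t\<in>S. \<forall>s\<in>S. dstrict le t s \<longrightarrow> (\<forall>x\<in>{0..1}. hh_point s x \<in> {z \<in> hh_carrier S. F z \<in> W})"
    proof (intro bexI[OF _ t(1)] ballI impI)
      fix s x assume "s \<in> S" "dstrict le t s" "x \<in> {0..1::real}"
      then show "hh_point s x \<in> {z \<in> hh_carrier S. F z \<in> W}"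
        using t(2) hh_point_in[of s S x] by blast
    qed
  qed
  then show "openin (arc_hedgehog S le) {x \<in> topspace (arc_hedgehog S le). F x \<in> W}"
    by (simp add: hh_openin[OF D] hh_topspace[OF D])
qed

lemma hh_cont_None:
  assumes D: "directed_set S le" and G: "continuous_map (arc_hedgehog S le) X G"
    and W: "openin X W" "G None \<in> W"
  shows "\<exists>t\<in>S. \<forall>s\<in>S. dstrict le t s \<longrightarrow> (\<forall>x\<in>{0..1}. G (hh_point s x) \<in> W)"
proof -
  have "openin (arc_hedgehog S le) {z \<in> topspace (arc_hedgehog S le). G z \<in> W}"
    using G W(1) by (simp add: continuous_map_def)
  then have h: "hh_open S le {z \<in> hh_carrier S. G z \<in> W}"
    by (simp add: hh_openin[OF D] hh_topspace[OF D])
  have "None \<in> hh_carrier S" by (simp add: hh_carrier_def)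
  with h W(2) have "\<exists>t\<in>S. \<forall>s\<in>S. dstrict le t s \<longrightarrow> (\<forall>x\<in>{0..1}. hh_point s x \<in> {z \<in> hh_carrier S. G z \<in> W})"
    unfolding hh_open_def by blast
  then show ?thesis by blast
qed


definition hh_par :: "('i \<times> real) option \<Rightarrow> real" where
  "hh_par z = (case z of None \<Rightarrow> 0 | Some sx \<Rightarrow> snd sx)"

lemma hh_par_point [simp]: "hh_par (hh_point s x) = x"
  by (simp add: hh_par_def hh_point_def)

lemma hh_par_None [simp]: "hh_par None = 0"
  by (simp add: hh_par_def)

lemma hh_par_carrier: "z \<in> hh_carrier S \<Longrightarrow> hh_par z \<in> {0..1}"
  by (auto simp: hh_carrier_def hh_par_def)

lemma single_directed: "directed_set {s0} (\<lambda>_ _. True)"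
  by (simp add: directed_set_def)

lemma single_cont:
  assumes "pathin X \<gamma>"
  shows "continuous_map (arc_hedgehog {s0} (\<lambda>_ _. True)) X (\<gamma> \<circ> hh_par)"
proof (rule hh_cont_crit[OF single_directed])
  fix z assume "z \<in> hh_carrier {s0}"
  then show "(\<gamma> \<circ> hh_par) z \<in> topspace X"
    using hh_par_carrier path_image_subset_topspace[OF assms] by fastforce
next
  fix s assume "s \<in> {s0}"
  have "(\<gamma> \<circ> hh_par) \<circ> hh_point s = \<gamma>" by (rule ext) simp
  then show "continuous_map (top_of_set {0..1}) X ((\<gamma> \<circ> hh_par) \<circ> hh_point s)"
    using assms by (simp add: pathin_def)
next
  fix W assume "openin X W" "(\<gamma> \<circ> hh_par) None \<in> W"
  show "\<exists>t\<in>{s0}. \<forall>s\<in>{s0}. dstrict (\<lambda>_ _. True) t s \<longrightarrow> (\<forall>x\<in>{0..1}. (\<gamma> \<circ> hh_par) (hh_point s x) \<in> W)"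
    by (simp add: dstrict_def)
qed

lemma path_lift_exists:
  assumes cov: "arc_hedgehog_covering TYPE('i) E B p"
    and a: "pathin B \<alpha>" and e0: "e0 \<in> topspace E" and a0: "\<alpha> 0 = p e0"
  shows "\<exists>\<beta>. pathin E \<beta> \<and> \<beta> 0 = e0 \<and> (\<forall>t\<in>{0..1}. p (\<beta> t) = \<alpha> t)"
proof -
  define s0 :: 'i where "s0 = undefined"
  let ?H = "arc_hedgehog {s0} (\<lambda>_ _. True)"
  have top: "topspace ?H = hh_carrier {s0}" by (rule hh_topspace[OF single_directed])
  have None_in: "None \<in> topspace ?H" by (simp add: top hh_carrier_def)
  have F: "continuous_map ?H B (\<alpha> \<circ> hh_par)" by (rule single_cont[OF a])
  have "(\<alpha> \<circ> hh_par) None = p e0" using a0 by simp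
  then obtain g where g: "continuous_map ?H E g" "\<forall>z\<in>topspace ?H. p (g z) = (\<alpha> \<circ> hh_par) z" "g None = e0"
    using cov e0 None_in F single_directed[of s0] unfolding arc_hedgehog_covering_def by blast
  show ?thesis
  proof (intro exI conjI ballI)
    show "pathin E (g \<circ> hh_point s0)"
      unfolding pathin_def by (rule continuous_map_compose[OF hh_point_cont[OF single_directed] g(1)]) simp
    show "(g \<circ> hh_point s0) 0 = e0" using g(3) by (simp add: hh_point_def)
    fix t :: real assume t: "t \<in> {0..1}"
    then have "hh_point s0 t \<in> topspace ?H" using hh_point_in[of s0 "{s0}" t] top by simp
    then show "p ((g \<circ> hh_point s0) t) = \<alpha> t" using g(2) by simp
  qed
qed

lemma path_lift_unique:
  assumes cov: "arc_hedgehog_covering TYPE('i) E B p"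
    and b1: "pathin E \<beta>1" and b2: "pathin E \<beta>2" and b0: "\<beta>1 0 = \<beta>2 0"
    and pb: "\<forall>t\<in>{0..1}. p (\<beta>1 t) = p (\<beta>2 t)"
    and t: "t \<in> {0..1}"
  shows "\<beta>1 t = \<beta>2 t"
proof -
  define s0 :: 'i where "s0 = undefined"
  let ?H = "arc_hedgehog {s0} (\<lambda>_ _. True)"
  have top: "topspace ?H = hh_carrier {s0}" by (rule hh_topspace[OF single_directed])
  have None_in: "None \<in> topspace ?H" by (simp add: top hh_carrier_def)
  have pc: "continuous_map E B p" using cov by (simp add: arc_hedgehog_covering_def)
  have a: "pathin B (p \<circ> \<beta>1)" by (rule pathin_compose[OF b1 pc])
  have F: "continuous_map ?H B ((p \<circ> \<beta>1) \<circ> hh_par)" by (rule single_cont[OF a])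
  have e0: "\<beta>1 0 \<in> topspace E" by (rule path_start_in_topspace[OF b1])
  have "((p \<circ> \<beta>1) \<circ> hh_par) None = p (\<beta>1 0)" by simp
  then obtain g where g: "\<forall>g'. continuous_map ?H E g'
                        \<and> (\<forall>z\<in>topspace ?H. p (g' z) = ((p \<circ> \<beta>1) \<circ> hh_par) z) \<and> g' None = \<beta>1 0
                        \<longrightarrow> (\<forall>z\<in>topspace ?H. g' z = g z)"
    using cov e0 None_in F single_directed[of s0] unfolding arc_hedgehog_covering_def by blast
  have G1: "continuous_map ?H E (\<beta>1 \<circ> hh_par)" by (rule single_cont[OF b1])
  have G2: "continuous_map ?H E (\<beta>2 \<circ> hh_par)" by (rule single_cont[OF b2])
  have p2: "\<forall>z\<in>topspace ?H. p ((\<beta>2 \<circ> hh_par) z) = ((p \<circ> \<beta>1) \<circ> hh_par) z"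
    using pb hh_par_carrier top by fastforce
  have p1: "\<forall>z\<in>topspace ?H. p ((\<beta>1 \<circ> hh_par) z) = ((p \<circ> \<beta>1) \<circ> hh_par) z" by simp
  have z: "hh_point s0 t \<in> topspace ?H" using hh_point_in[of s0 "{s0}" t] top t by simp
  have "\<forall>z\<in>topspace ?H. (\<beta>1 \<circ> hh_par) z = g z"
    using g G1 p1 by (metis comp_apply hh_par_None)
  then have "(\<beta>1 \<circ> hh_par) (hh_point s0 t) = g (hh_point s0 t)" using z by blast
  moreover have "\<forall>z\<in>topspace ?H. (\<beta>2 \<circ> hh_par) z = g z"
    using g G2 p2 b0 by (metis comp_apply hh_par_None)
  then have "(\<beta>2 \<circ> hh_par) (hh_point s0 t) = g (hh_point s0 t)" using z by blast
  ultimately show ?thesis by simp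
qed


definition jn :: "(real \<Rightarrow> 'a) \<Rightarrow> (real \<Rightarrow> 'a) \<Rightarrow> real \<Rightarrow> 'a" where
  "jn g1 g2 = (\<lambda>x. if x \<le> 1/2 then g1 (2 * x) else g2 (2 * x - 1))"

lemma pathin_jn:
  assumes "pathin X g1" "pathin X g2" "g2 0 = g1 1"
  shows "pathin X (jn g1 g2)"
proof -
  let ?T01 = "top_of_set {0..1::real}"
  have g1: "continuous_map ?T01 X g1" and g2: "continuous_map ?T01 X g2"
    using assms by (auto simp: pathin_def)
  let ?g = "\<lambda>x. if x \<le> 1/2 then (g1 \<circ> (\<lambda>t. 2 * t)) x else (g2 \<circ> (\<lambda>t. 2 * t -1)) x"
  have "continuous_map (subtopology euclideanreal {0..1}) X ?g"
    proof (intro continuous_map_cases_le continuous_map_compose, force, force)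
      show "continuous_map (subtopology ?T01 {x \<in> topspace ?T01. x \<le> 1/2}) ?T01 ((*) 2)"
        by (auto simp: continuous_map_in_subtopology continuous_map_from_subtopology)
      have "continuous_map
             (subtopology (top_of_set {0..1}) {x. 0 \<le> x \<and> x \<le> 1 \<and> 1 \<le> x * 2})
             euclideanreal (\<lambda>t. 2 * t - 1)"
        by (intro continuous_intros) (force intro: continuous_map_from_subtopology)
      then show "continuous_map (subtopology ?T01 {x \<in> topspace ?T01. 1/2 \<le> x}) ?T01 (\<lambda>t. 2 * t - 1)"
        by (force simp: continuous_map_in_subtopology)
      show "(g1 \<circ> (*) 2) x = (g2 \<circ> (\<lambda>t. 2 * t - 1)) x" if "x \<in> topspace ?T01" "x = 1/2" for x
        using that by (simp add: assms(3) mult.commute continuous_map_from_subtopology)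
    qed (auto simp: g1 g2)
  moreover have "?g = jn g1 g2" by (rule ext) (simp add: jn_def)
  ultimately show ?thesis by (simp add: pathin_def)
qed

lemma jn_0 [simp]: "jn g1 g2 0 = g1 0" by (simp add: jn_def)
lemma jn_1 [simp]: "jn g1 g2 1 = g2 1" by (simp add: jn_def)

lemma pathin_affine:
  assumes "pathin X g" and ab: "\<And>t. t \<in> {0..1} \<Longrightarrow> a * t + b \<in> {0..1::real}"
  shows "pathin X (\<lambda>t. g (a * t + b))"
proof -
  have "continuous_map (top_of_set {0..1}) euclideanreal (\<lambda>t. a * t + b)"
    by (simp add: continuous_intros)
  then have "continuous_map (top_of_set {0..1}) (top_of_set {0..1}) (\<lambda>t. a * t + b)"
    using ab by (auto simp: continuous_map_in_subtopology)
  from continuous_map_compose[OF this] assms(1) show ?thesis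
    by (simp add: pathin_def o_def)
qed


definition lp :: "'e topology \<Rightarrow> ('e \<Rightarrow> 'b) \<Rightarrow> 'e \<Rightarrow> 'e \<Rightarrow> 'e \<Rightarrow> (real \<Rightarrow> 'e) \<Rightarrow> (real \<Rightarrow> 'e) \<Rightarrow> bool" where
  "lp E p a b x \<gamma> \<beta> \<longleftrightarrow> pathin E \<gamma> \<and> \<gamma> 0 = a \<and> \<gamma> 1 = x \<and> pathin E \<beta> \<and> \<beta> 0 = b
      \<and> (\<forall>t\<in>{0..1}. p (\<beta> t) = p (\<gamma> t))"

definition Hm :: "'e topology \<Rightarrow> ('e \<Rightarrow> 'b) \<Rightarrow> 'e \<Rightarrow> 'e \<Rightarrow> 'e \<Rightarrow> 'e" where
  "Hm E p a b x = (SOME y. \<exists>\<gamma> \<beta>. lp E p a b x \<gamma> \<beta> \<and> \<beta> 1 = y)"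

context
  fixes E :: "'e topology" and B :: "'b topology" and p :: "'e \<Rightarrow> 'b"
  assumes cov: "arc_hedgehog_covering TYPE('i) E B p"
begin

lemma pc: "continuous_map E B p" using cov by (simp add: arc_hedgehog_covering_def)

lemma WD:
  assumes reg: "regular_covering E B p" and b: "b \<in> topspace E" and pab: "p a = p b"
    and P1: "lp E p a b x \<gamma> \<beta>" and P2: "lp E p a b x \<gamma>' \<beta>'"
  shows "\<beta> 1 = \<beta>' 1"
proof -
  have g: "pathin E \<gamma>" "\<gamma> 0 = a" "\<gamma> 1 = x" and bt: "pathin E \<beta>" "\<beta> 0 = b"
    and pb: "\<forall>t\<in>{0..1}. p (\<beta> t) = p (\<gamma> t)"
    using P1 by (auto simp: lp_def)
  have g': "pathin E \<gamma>'" "\<gamma>' 0 = a" "\<gamma>' 1 = x" and bt': "pathin E \<beta>'" "\<beta>' 0 = b"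
    and pb': "\<forall>t\<in>{0..1}. p (\<beta>' t) = p (\<gamma>' t)"
    using P2 by (auto simp: lp_def)
  define r where "r = (\<lambda>t. \<gamma>' ((-1) * t + 1))"
  have r: "pathin E r" unfolding r_def by (rule pathin_affine[OF g'(1)]) auto
  define \<delta> where "\<delta> = jn \<gamma> r"
  have d: "pathin E \<delta>" unfolding \<delta>_def by (rule pathin_jn[OF g(1) r]) (simp add: r_def g g')
  have d01: "\<delta> 0 = a" "\<delta> 1 = a" by (simp_all add: \<delta>_def r_def g g')
  define \<alpha> where "\<alpha> = p \<circ> \<delta>"
  have a: "pathin B \<alpha>" unfolding \<alpha>_def by (rule pathin_compose[OF d pc])
  have a01: "\<alpha> 0 = \<alpha> 1" by (simp add: \<alpha>_def d01)
  have "is_lift E p \<alpha> \<delta>" by (simp add: is_lift_def d \<alpha>_def)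
  then have all: "\<forall>L. is_lift E p \<alpha> L \<longrightarrow> L 0 = L 1"
    using reg a a01 d01 unfolding regular_covering_def by metis
  obtain L where L: "pathin E L" "L 0 = b" "\<forall>t\<in>{0..1}. p (L t) = \<alpha> t"
    using path_lift_exists[OF cov a b] d01 pab \<alpha>_def by auto
  have L01: "L 0 = L 1" using all L unfolding is_lift_def by blast
  define L1 where "L1 = (\<lambda>t. L ((1/2) * t + 0))"
  have L1: "pathin E L1" unfolding L1_def by (rule pathin_affine[OF L(1)]) auto
  have "L1 1 = \<beta> 1"
  proof (rule path_lift_unique[OF cov L1 bt(1)])
    show "L1 0 = \<beta> 0" by (simp add: L1_def L bt)
    show "\<forall>t\<in>{0..1}. p (L1 t) = p (\<beta> t)"
    proof
      fix t :: real assume t: "t \<in> {0..1}"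
      then have "p (L1 t) = \<alpha> (t/2)" using L(3) by (simp add: L1_def)
      also have "\<dots> = p (\<gamma> t)" using t by (simp add: \<alpha>_def \<delta>_def jn_def)
      finally show "p (L1 t) = p (\<beta> t)" using pb t by simp
    qed
  qed simp
  define L2 where "L2 = (\<lambda>t. L ((-1/2) * t + 1))"
  have L2: "pathin E L2" unfolding L2_def by (rule pathin_affine[OF L(1)]) auto
  have "L2 1 = \<beta>' 1"
  proof (rule path_lift_unique[OF cov L2 bt'(1)])
    show "L2 0 = \<beta>' 0" by (simp add: L2_def L bt' L01[symmetric])
    show "\<forall>t\<in>{0..1}. p (L2 t) = p (\<beta>' t)"
    proof
      fix t :: real assume t: "t \<in> {0..1}"
      then have "p (L2 t) = \<alpha> (1 - t/2)" using L(3) by (simp add: L2_def)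
      also have "\<dots> = p (\<gamma>' t)"
      proof (cases "t = 1")
        case True then show ?thesis by (simp add: \<alpha>_def \<delta>_def jn_def g g')
      next
        case False
        then have "\<not> 1 - t/2 \<le> 1/2" using t by auto
        moreover have "-1 * (2 * (1 - t / 2) - 1) + 1 = t" by (simp add: algebra_simps)
        ultimately show ?thesis by (simp add: \<alpha>_def \<delta>_def jn_def r_def)
      qed
      finally show "p (L2 t) = p (\<beta>' t)" using pb' t by simp
    qed
  qed simp
  moreover have "L2 1 = L1 1" by (simp add: L1_def L2_def)
  ultimately show ?thesis using \<open>L1 1 = \<beta> 1\<close> by simp
qed


lemma lp_exists:
  assumes PC: "path_connected_space E" and a: "a \<in> topspace E" and b: "b \<in> topspace E"
    and pab: "p a = p b" and x: "x \<in> topspace E"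
  shows "\<exists>\<gamma> \<beta>. lp E p a b x \<gamma> \<beta>"
proof -
  obtain \<gamma> where g: "pathin E \<gamma>" "\<gamma> 0 = a" "\<gamma> 1 = x"
    using PC a x unfolding path_connected_space_def by blast
  have "pathin B (p \<circ> \<gamma>)" by (rule pathin_compose[OF g(1) pc])
  then obtain \<beta> where "pathin E \<beta>" "\<beta> 0 = b" "\<forall>t\<in>{0..1}. p (\<beta> t) = (p \<circ> \<gamma>) t"
    using path_lift_exists[OF cov _ b] g pab by force
  then show ?thesis using g unfolding lp_def by auto
qed

lemma H_char:
  assumes reg: "regular_covering E B p" and b: "b \<in> topspace E" and pab: "p a = p b"
    and P: "lp E p a b x \<gamma> \<beta>"
  shows "Hm E p a b x = \<beta> 1"
proof -
  have "\<exists>y. \<exists>\<gamma> \<beta>. lp E p a b x \<gamma> \<beta> \<and> \<beta> 1 = y" using P by blast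
  from someI_ex[OF this] obtain \<gamma>0 \<beta>0 where "lp E p a b x \<gamma>0 \<beta>0" "\<beta>0 1 = Hm E p a b x"
    unfolding Hm_def by blast
  then show ?thesis using WD[OF reg b pab P] by metis
qed

lemma H_ext:
  assumes reg: "regular_covering E B p" and PC: "path_connected_space E"
    and a: "a \<in> topspace E" and b: "b \<in> topspace E" and pab: "p a = p b"
    and x: "x \<in> topspace E"
    and g: "pathin E \<gamma>" "\<gamma> 0 = x" and bt: "pathin E \<beta>" "\<beta> 0 = Hm E p a b x"
    and pb: "\<forall>t\<in>{0..1}. p (\<beta> t) = p (\<gamma> t)"
  shows "Hm E p a b (\<gamma> 1) = \<beta> 1"
proof -
  obtain \<gamma>x \<beta>x where P: "lp E p a b x \<gamma>x \<beta>x" using lp_exists[OF PC a b pab x] by blast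
  have Hx: "Hm E p a b x = \<beta>x 1" by (rule H_char[OF reg b pab P])
  have P': "pathin E \<gamma>x" "\<gamma>x 0 = a" "\<gamma>x 1 = x" "pathin E \<beta>x" "\<beta>x 0 = b"
    "\<forall>t\<in>{0..1}. p (\<beta>x t) = p (\<gamma>x t)" using P by (auto simp: lp_def)
  have "lp E p a b (\<gamma> 1) (jn \<gamma>x \<gamma>) (jn \<beta>x \<beta>)"
    unfolding lp_def
  proof (intro conjI ballI)
    show "pathin E (jn \<gamma>x \<gamma>)" by (rule pathin_jn[OF P'(1) g(1)]) (simp add: g P')
    show "pathin E (jn \<beta>x \<beta>)" by (rule pathin_jn[OF P'(4) bt(1)]) (simp add: bt Hx)
    show "jn \<gamma>x \<gamma> 0 = a" "jn \<gamma>x \<gamma> 1 = \<gamma> 1" "jn \<beta>x \<beta> 0 = b" by (simp_all add: P')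
    fix t :: real assume t: "t \<in> {0..1}"
    show "p (jn \<beta>x \<beta> t) = p (jn \<gamma>x \<gamma> t)"
    proof (cases "t \<le> 1/2")
      case True
      then have "2 * t \<in> {0..1}" using t by auto
      then show ?thesis using True P'(6) by (simp add: jn_def)
    next
      case False
      then have "2 * t - 1 \<in> {0..1}" using t by auto
      then show ?thesis using False pb by (simp add: jn_def)
    qed
  qed
  from H_char[OF reg b pab this] show ?thesis by simp
qed

lemma H_top:
  assumes reg: "regular_covering E B p" and PC: "path_connected_space E"
    and a: "a \<in> topspace E" and b: "b \<in> topspace E" and pab: "p a = p b"
    and x: "x \<in> topspace E"
  shows "Hm E p a b x \<in> topspace E \<and> p (Hm E p a b x) = p x"
proof -
  obtain \<gamma> \<beta> where P: "lp E p a b x \<gamma> \<beta>" using lp_exists[OF PC a b pab x] by blast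
  have H: "Hm E p a b x = \<beta> 1" by (rule H_char[OF reg b pab P])
  have "pathin E \<beta>" "\<gamma> 1 = x" "p (\<beta> 1) = p (\<gamma> 1)" using P by (auto simp: lp_def)
  then show ?thesis using H path_finish_in_topspace by metis
qed

lemma H_a:
  assumes reg: "regular_covering E B p" and a: "a \<in> topspace E" and b: "b \<in> topspace E" and pab: "p a = p b"
  shows "Hm E p a b a = b"
proof -
  have "lp E p a b a (\<lambda>_. a) (\<lambda>_. b)" using a b pab by (simp add: lp_def)
  from H_char[OF reg b pab this] show ?thesis by simp
qed

lemma H_inv:
  assumes reg: "regular_covering E B p" and PC: "path_connected_space E"
    and a: "a \<in> topspace E" and b: "b \<in> topspace E" and pab: "p a = p b"
    and x: "x \<in> topspace E"
  shows "Hm E p b a (Hm E p a b x) = x"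
proof -
  obtain \<gamma> \<beta> where P: "lp E p a b x \<gamma> \<beta>" using lp_exists[OF PC a b pab x] by blast
  have H: "Hm E p a b x = \<beta> 1" by (rule H_char[OF reg b pab P])
  have "lp E p b a (\<beta> 1) \<beta> \<gamma>" using P by (auto simp: lp_def)
  from H_char[OF reg a pab[symmetric] this] H P show ?thesis by (simp add: lp_def)
qed

lemma hh_carrier_cases:
  assumes "z \<in> hh_carrier S" "S \<noteq> {}"
  shows "\<exists>s\<in>S. \<exists>r\<in>{0..1}. z = hh_point s r"
proof (cases "z = None")
  case True
  obtain s where "s \<in> S" using assms(2) by blast
  then show ?thesis using True by (intro bexI[of _ s] bexI[of _ 0]) (auto simp: hh_point_def)
next
  case False
  then obtain s r where "z = Some (s, r)" "s \<in> S" "0 < r" "r \<le> 1"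
    using assms(1) by (auto simp: hh_carrier_def)
  then show ?thesis by (intro bexI[of _ s] bexI[of _ r]) (auto simp: hh_point_def)
qed

lemma H_cont:
  assumes reg: "regular_covering E B p" and PC: "path_connected_space E"
    and big: "\<exists>j :: 'e set \<Rightarrow> 'i. inj j"
    and lpc: "locally_path_connected_space E"
    and a: "a \<in> topspace E" and b: "b \<in> topspace E" and pab: "p a = p b"
  shows "continuous_map E E (Hm E p a b)"
  unfolding continuous_map_def
proof (intro conjI allI impI)
  let ?H = "Hm E p a b"
  have Htop: "\<And>x. x \<in> topspace E \<Longrightarrow> ?H x \<in> topspace E \<and> p (?H x) = p x"
    using H_top[OF reg PC a b pab] by blast
  show "?H \<in> topspace E \<rightarrow> topspace E" using Htop by blast
  fix V assume V: "openin E V"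
  show "openin E {x \<in> topspace E. ?H x \<in> V}"
  proof (subst openin_subopen, intro ballI, rule ccontr)
    fix x assume xV: "x \<in> {x \<in> topspace E. ?H x \<in> V}"
      and nb: "\<not> (\<exists>T. openin E T \<and> x \<in> T \<and> T \<subseteq> {x \<in> topspace E. ?H x \<in> V})"
    have x: "x \<in> topspace E" and HxV: "?H x \<in> V" using xV by auto
    have bad: "\<exists>y\<in>T. ?H y \<notin> V" if "openin E T" "x \<in> T" for T
      using nb that openin_subset[OF that(1)] by blast
    have C: "\<exists>\<gamma>. pathin E \<gamma> \<and> \<gamma> 0 = x \<and> (\<forall>t\<in>{0..1}. \<gamma> t \<in> U) \<and> ?H (\<gamma> 1) \<notin> V"
      if U: "openin E U" "x \<in> U" for U
    proof -
      obtain W where W: "openin E W" "path_connectedin E W" "x \<in> W" "W \<subseteq> U"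
        using lpc U unfolding locally_path_connected_space by blast
      obtain y where y: "y \<in> W" "?H y \<notin> V" using bad[OF W(1) W(3)] by blast
      obtain g where g: "pathin E g" "g \<in> {0..1} \<rightarrow> W" "g 0 = x" "g 1 = y"
        using W(2) W(3) y(1) unfolding path_connectedin by blast
      show ?thesis using g y W(4) by (intro exI[of _ g]) auto
    qed
    show False
    proof (cases "\<exists>U0. openin E U0 \<and> x \<in> U0 \<and> (\<forall>W. openin E W \<and> x \<in> W \<longrightarrow> U0 \<subseteq> W)")
      case True
      then obtain U0 where U0: "openin E U0" "x \<in> U0" "\<And>W. openin E W \<Longrightarrow> x \<in> W \<Longrightarrow> U0 \<subseteq> W"
        by blast
      obtain y where y: "y \<in> U0" "?H y \<notin> V" using bad[OF U0(1) U0(2)] by blast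
      have ytop: "y \<in> topspace E" using y(1) openin_subset[OF U0(1)] by blast
      define c where "c = (\<lambda>t::real. if t < 1 then y else x)"
      have c: "pathin E c"
        unfolding pathin_def continuous_map_def
      proof (intro conjI allI impI)
        show "c \<in> topspace (top_of_set {0..1}) \<rightarrow> topspace E" using x ytop by (auto simp: c_def)
        fix W assume W: "openin E W"
        show "openin (top_of_set {0..1}) {t \<in> topspace (top_of_set {0..1}). c t \<in> W}"
        proof (cases "x \<in> W")
          case True
          then have "y \<in> W" using U0(3)[OF W] y(1) by blast
          then have "{t \<in> topspace (top_of_set {0..1}). c t \<in> W} = topspace (top_of_set {0..1::real})"
            using True by (auto simp: c_def)
          then show ?thesis by (metis openin_topspace)
        next
          case False
          show ?thesis
          proof (cases "y \<in> W")
            case True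
            then have "{t \<in> topspace (top_of_set {0..1}). c t \<in> W} = {0..1::real} \<inter> {..<1}"
              using False by (auto simp: c_def)
            then show ?thesis by (simp add: openin_open_Int)
          next
            case False2: False
            then have "{t \<in> topspace (top_of_set {0..1}). c t \<in> W} = {}"
              using False by (auto simp: c_def)
            then show ?thesis by (metis openin_empty)
          qed
        qed
      qed
      have Hy: "?H y \<in> topspace E" "p (?H y) = p y" using Htop[OF ytop] by auto
      have pcp: "pathin B (p \<circ> c)" by (rule pathin_compose[OF c pc])
      obtain \<beta> where bt: "pathin E \<beta>" "\<beta> 0 = ?H y" "\<forall>t\<in>{0..1}. p (\<beta> t) = (p \<circ> c) t"
        using path_lift_exists[OF cov pcp Hy(1)] Hy(2) by (auto simp: c_def)
      have "?H (c 1) = \<beta> 1"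
        by (rule H_ext[OF reg PC a b pab ytop c _ bt(1) bt(2)]) (use bt(3) in \<open>auto simp: c_def\<close>)
      then have b1: "\<beta> 1 \<in> V" using HxV by (simp add: c_def)
      have const: "\<beta> t0 = ?H y" if t0: "t0 \<in> {0..1}" "t0 < 1" for t0
      proof -
        define br where "br = (\<lambda>s. \<beta> (t0 * s + 0))"
        have brp: "pathin E br" unfolding br_def
          by (rule pathin_affine[OF bt(1)]) (use t0 in \<open>auto simp: mult_le_one\<close>)
        have "br 1 = ?H y"
        proof (rule path_lift_unique[OF cov brp])
          show "pathin E (\<lambda>_. ?H y)" using Hy by simp
          show "br 0 = ?H y" using bt by (simp add: br_def)
          show "\<forall>t\<in>{0..1}. p (br t) = p (?H y)"
          proof
            fix s :: real assume s: "s \<in> {0..1}"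
            have "t0 * s \<in> {0..1}" "t0 * s < 1" using s t0
              by (auto simp: mult_le_one) (metis le_less_trans mult_left_le mult.commute)
            then show "p (br s) = p (?H y)" using bt(3) Hy(2) by (simp add: br_def c_def)
          qed
        qed simp
        then show ?thesis by (simp add: br_def)
      qed
      have "openin (top_of_set {0..1}) {t \<in> topspace (top_of_set {0..1}). \<beta> t \<in> V}"
        using bt(1) V by (simp add: pathin_def continuous_map_def)
      then have op: "openin (top_of_set {0..1}) {t \<in> {0..1::real}. \<beta> t \<in> V}" by simp
      have "(1::real) \<in> {t \<in> {0..1::real}. \<beta> t \<in> V}" using b1 by simp
      then obtain e where e: "e > 0" "\<And>x'. x' \<in> {0..1} \<Longrightarrow> dist x' 1 < e \<Longrightarrow> x' \<in> {t \<in> {0..1::real}. \<beta> t \<in> V}"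
        using op unfolding openin_euclidean_subtopology_iff by blast
      define t where "t = max 0 (1 - e/2)"
      have t: "t \<in> {0..1}" "t < 1" "dist t 1 < e" using e(1) by (auto simp: t_def dist_real_def)
      then have "\<beta> t \<in> V" using e(2) by blast
      moreover have "\<beta> t = ?H y" using const t by blast
      ultimately show False using y(2) by simp
    next
      case False
      then have nst: "\<exists>W. openin E W \<and> x \<in> W \<and> \<not> U \<subseteq> W" if "openin E U" "x \<in> U" for U
        using that by blast
      obtain j :: "'e set \<Rightarrow> 'i" where j: "inj j" using big by blast
      define N where "N = {U. openin E U \<and> x \<in> U}"
      define S where "S = j ` N"
      define le where "le = (\<lambda>s t. inv j t \<subseteq> inv j s)"
      have ij: "\<And>U. inv j (j U) = U" using j by (simp add: inv_f_f)
      have topN: "topspace E \<in> N" using x by (simp add: N_def)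
      have D: "directed_set S le"
        unfolding directed_set_def
      proof (intro conjI ballI impI)
        show "S \<noteq> {}" using topN by (auto simp: S_def)
        fix s assume "s \<in> S" then show "le s s" by (simp add: le_def)
      next
        fix r s t assume "r \<in> S" "s \<in> S" "t \<in> S" "le r s \<and> le s t"
        then show "le r t" by (auto simp: le_def)
      next
        fix s t assume st: "s \<in> S" "t \<in> S"
        then obtain U U' where UU: "U \<in> N" "U' \<in> N" "s = j U" "t = j U'" by (auto simp: S_def)
        then have "U \<inter> U' \<in> N" by (auto simp: N_def)
        then show "\<exists>u\<in>S. le s u \<and> le t u"
          using UU by (intro bexI[of _ "j (U \<inter> U')"]) (auto simp: le_def ij S_def)
      qed
      have SN: "inv j s \<in> N" if "s \<in> S" for s using that by (auto simp: S_def ij)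
      have "\<forall>U\<in>N. \<exists>\<gamma>. pathin E \<gamma> \<and> \<gamma> 0 = x \<and> (\<forall>t\<in>{0..1}. \<gamma> t \<in> U) \<and> ?H (\<gamma> 1) \<notin> V"
        using C by (auto simp: N_def)
      then obtain gs where gs: "\<And>U. U \<in> N \<Longrightarrow> pathin E (gs U) \<and> gs U 0 = x \<and> (\<forall>t\<in>{0..1}. gs U t \<in> U) \<and> ?H (gs U 1) \<notin> V"
        by metis
      define F where "F = (\<lambda>z. if z = None then x else gs (inv j (fst (the z))) (hh_par z))"
      have Fpt: "F (hh_point s r) = gs (inv j s) r" if "s \<in> S" for s r
        using gs[OF SN[OF that]] by (simp add: F_def hh_point_def hh_par_def)
      have Fc: "continuous_map (arc_hedgehog S le) E F"
      proof (rule hh_cont_crit[OF D])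
        fix z assume "z \<in> hh_carrier S"
        then obtain s r where sr: "s \<in> S" "r \<in> {0..1}" "z = hh_point s r"
          using hh_carrier_cases D by (metis directed_set_def)
        then show "F z \<in> topspace E"
          using Fpt gs[OF SN[OF sr(1)]] path_image_subset_topspace by fastforce
      next
        fix s assume s: "s \<in> S"
        have "continuous_map (top_of_set {0..1}) E (gs (inv j s))"
          using gs[OF SN[OF s]] by (simp add: pathin_def)
        then show "continuous_map (top_of_set {0..1}) E (F \<circ> hh_point s)"
          by (rule continuous_map_eq) (simp add: Fpt[OF s])
      next
        fix W assume W: "openin E W" "F None \<in> W"
        then have WN: "W \<in> N" by (simp add: N_def F_def)
        show "\<exists>t\<in>S. \<forall>s\<in>S. dstrict le t s \<longrightarrow> (\<forall>r\<in>{0..1}. F (hh_point s r) \<in> W)"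
        proof (intro bexI[of _ "j W"] ballI impI)
          show "j W \<in> S" using WN by (simp add: S_def)
          fix s r assume s: "s \<in> S" "dstrict le (j W) s" and r: "r \<in> {0..1::real}"
          then have "inv j s \<subseteq> W" by (simp add: dstrict_def le_def ij)
          then show "F (hh_point s r) \<in> W" using gs[OF SN[OF s(1)]] r Fpt[OF s(1)] by auto
        qed
      qed
      have pF: "continuous_map (arc_hedgehog S le) B (p \<circ> F)" by (rule continuous_map_compose[OF Fc pc])
      have Hx: "?H x \<in> topspace E" "p (?H x) = p x" using Htop[OF x] by auto
      have None_in: "None \<in> topspace (arc_hedgehog S le)" by (simp add: hh_topspace[OF D] hh_carrier_def)
      have fN: "(p \<circ> F) None = p (?H x)" using Hx by (simp add: F_def)
      have "\<exists>g. continuous_map (arc_hedgehog S le) E g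
                \<and> (\<forall>z\<in>topspace (arc_hedgehog S le). p (g z) = (p \<circ> F) z) \<and> g None = ?H x"
        using cov Hx(1) D None_in pF fN unfolding arc_hedgehog_covering_def by blast
      then obtain G where G: "continuous_map (arc_hedgehog S le) E G"
        "\<forall>z\<in>topspace (arc_hedgehog S le). p (G z) = (p \<circ> F) z" "G None = ?H x" by blast
      obtain t where t: "t \<in> S" "\<forall>s\<in>S. dstrict le t s \<longrightarrow> (\<forall>r\<in>{0..1}. G (hh_point s r) \<in> V)"
        using hh_cont_None[OF D G(1) V] G(3) HxV by auto
      obtain T where T: "T \<in> N" "t = j T" using t(1) by (auto simp: S_def)
      obtain W where W: "openin E W" "x \<in> W" "\<not> T \<subseteq> W" using nst T(1) by (auto simp: N_def)
      have TW: "T \<inter> W \<in> N" using T(1) W by (auto simp: N_def)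
      define s where "s = j (T \<inter> W)"
      have s: "s \<in> S" using TW by (simp add: s_def S_def)
      have "dstrict le t s" using W(3) by (auto simp: dstrict_def le_def s_def T(2) ij)
      then have GV: "G (hh_point s 1) \<in> V" using t(2) s by auto
      define \<gamma> where "\<gamma> = gs (T \<inter> W)"
      have g: "pathin E \<gamma>" "\<gamma> 0 = x" "?H (\<gamma> 1) \<notin> V" using gs[OF TW] by (auto simp: \<gamma>_def)
      have bp: "pathin E (G \<circ> hh_point s)"
        unfolding pathin_def by (rule continuous_map_compose[OF hh_point_cont[OF D s] G(1)])
      have b0: "(G \<circ> hh_point s) 0 = ?H x" using G(3) by (simp add: hh_point_def)
      have pbg: "\<forall>r\<in>{0..1}. p ((G \<circ> hh_point s) r) = p (\<gamma> r)"
      proof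
        fix r :: real assume r: "r \<in> {0..1}"
        have "hh_point s r \<in> topspace (arc_hedgehog S le)"
          using hh_point_in[OF s r] by (simp add: hh_topspace[OF D])
        then show "p ((G \<circ> hh_point s) r) = p (\<gamma> r)" using G(2) Fpt[OF s] by (simp add: \<gamma>_def s_def ij)
      qed
      have "?H (\<gamma> 1) = (G \<circ> hh_point s) 1"
        by (rule H_ext[OF reg PC a b pab x g(1) g(2) bp b0 pbg])
      then show False using GV g(3) by simp
    qed
  qed
qed

end

theorem theorem3p9:
  fixes E :: "'e topology" and B :: "'b topology" and p :: "'e \<Rightarrow> 'b"
  assumes big: "\<exists>j :: 'e set \<Rightarrow> 'i. inj j"
    and cov: "arc_hedgehog_covering TYPE('i) E B p"
    and peano: "peano_space E"
  shows "regular_covering E B p \<longleftrightarrow>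
         (\<forall>e1\<in>topspace E. \<forall>e2\<in>topspace E. p e1 = p e2 \<longrightarrow> (\<exists>h\<in>DTG E p. h e1 = e2))"
proof
  assume reg: "regular_covering E B p"
  have lpc: "locally_path_connected_space E" using peano by (simp add: peano_space_def)
  have PC: "path_connected_space E"
    using peano lpc path_connected_eq_connected_space by (auto simp: peano_space_def)
  show "\<forall>e1\<in>topspace E. \<forall>e2\<in>topspace E. p e1 = p e2 \<longrightarrow> (\<exists>h\<in>DTG E p. h e1 = e2)"
  proof (intro ballI impI)
    fix e1 e2 assume e1: "e1 \<in> topspace E" and e2: "e2 \<in> topspace E" and pe: "p e1 = p e2"
    have "homeomorphic_maps E E (Hm E p e1 e2) (Hm E p e2 e1)"
      unfolding homeomorphic_maps_def
      using H_cont[OF cov reg PC big lpc e1 e2 pe] H_cont[OF cov reg PC big lpc e2 e1 pe[symmetric]]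
        H_inv[OF cov reg PC e1 e2 pe] H_inv[OF cov reg PC e2 e1 pe[symmetric]] by blast
    then have "homeomorphic_map E E (Hm E p e1 e2)" using homeomorphic_map_maps by blast
    moreover have "\<forall>e\<in>topspace E. p (Hm E p e1 e2 e) = p e"
      using H_top[OF cov reg PC e1 e2 pe] by blast
    ultimately have "Hm E p e1 e2 \<in> DTG E p" by (simp add: DTG_def)
    moreover have "Hm E p e1 e2 e1 = e2" by (rule H_a[OF cov reg e1 e2 pe])
    ultimately show "\<exists>h\<in>DTG E p. h e1 = e2" by blast
  qed
next
  assume tr: "\<forall>e1\<in>topspace E. \<forall>e2\<in>topspace E. p e1 = p e2 \<longrightarrow> (\<exists>h\<in>DTG E p. h e1 = e2)"
  show "regular_covering E B p"
    unfolding regular_covering_def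
  proof (intro allI impI)
    fix \<alpha> assume a: "pathin B \<alpha> \<and> \<alpha> 0 = \<alpha> 1"
    show "(\<forall>\<beta>. is_lift E p \<alpha> \<beta> \<longrightarrow> \<beta> 0 = \<beta> 1) \<or> (\<forall>\<beta>. is_lift E p \<alpha> \<beta> \<longrightarrow> \<beta> 0 \<noteq> \<beta> 1)"
    proof (rule ccontr)
      assume "\<not> ?thesis"
      then obtain \<beta>1 \<beta>2 where b1: "is_lift E p \<alpha> \<beta>1" "\<beta>1 0 = \<beta>1 1"
        and b2: "is_lift E p \<alpha> \<beta>2" "\<beta>2 0 \<noteq> \<beta>2 1" by blast
      have p1: "pathin E \<beta>1" "\<forall>t\<in>{0..1}. p (\<beta>1 t) = \<alpha> t" using b1 by (auto simp: is_lift_def)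
      have p2: "pathin E \<beta>2" "\<forall>t\<in>{0..1}. p (\<beta>2 t) = \<alpha> t" using b2 by (auto simp: is_lift_def)
      have "p (\<beta>1 0) = p (\<beta>2 0)" using p1 p2 by simp
      then obtain h where h: "h \<in> DTG E p" "h (\<beta>1 0) = \<beta>2 0"
        using tr path_start_in_topspace[OF p1(1)] path_start_in_topspace[OF p2(1)] by blast
      have hc: "continuous_map E E h" and hp: "\<forall>e\<in>topspace E. p (h e) = p e"
        using h(1) homeomorphic_imp_continuous_map by (auto simp: DTG_def)
      have hb: "pathin E (h \<circ> \<beta>1)" by (rule pathin_compose[OF p1(1) hc])
      have "(h \<circ> \<beta>1) 1 = \<beta>2 1"
      proof (rule path_lift_unique[OF cov hb p2(1)])
        show "(h \<circ> \<beta>1) 0 = \<beta>2 0" using h(2) by simp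
        show "\<forall>t\<in>{0..1}. p ((h \<circ> \<beta>1) t) = p (\<beta>2 t)"
        proof
          fix t :: real assume t: "t \<in> {0..1}"
          then have "\<beta>1 t \<in> topspace E" using path_image_subset_topspace[OF p1(1)] by blast
          then show "p ((h \<circ> \<beta>1) t) = p (\<beta>2 t)" using hp p1(2) p2(2) t by simp
        qed
      qed simp
      then show False using b1(2) b2(2) h(2) by simp
    qed
  qed
qed

end
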